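(* Let $m>0$, $\gamma\in\mathbb{R}$, $f$ a real function, and consider the system $$i\partial_t\psi_1=\partial_x\psi_2-f(|\psi_1|^2-|\psi_2|^2)\psi_1+m\psi_1+i\gamma\psi_2,\qquad i\partial_t\psi_2=-\partial_x\psi_1+f(|\psi_1|^2-|\psi_2|^2)\psi_2-m\psi_2+i\gamma\psi_1.$$ Suppose $(\tilde v(x),\tilde u(x))$ (complex-valued) is such that $(\tilde v,\tilde u)^Te^{-i\tilde\omega t}$ is a solution. Then for all $\alpha_\pm\in\mathbb{C}$ with $|\alpha_-|^2-|\alpha_+|^2=1$, $$\psi_1(t,x)=\alpha_-\tilde v(x)e^{-i\tilde\omega t}-i\alpha_+\overline{\tilde u(x)}e^{i\tilde\omega t},\qquad \psi_2(t,x)=\alpha_-\tilde u(x)e^{-i\tilde\omega t}-i\alpha_+\overline{\tilde v(x)}e^{i\tilde\omega t}$$ is also a solution, and $|\psi_1|^2-|\psi_2|^2=|\tilde v|^2-|\tilde u|^2$ for all $t$.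
   Context: This is the one-dimensional Soler model with a $\mathcal{P}\mathcal{T}$-symmetric gain–loss term $i\gamma\sigma_1\psi$ (the case $\gamma=0$ is the ordinary 1D Soler model). Overline denotes complex conjugation. *)

theory Defs
  imports Complex_Main
begin

definition soler_solution ::
  "real \<Rightarrow> real \<Rightarrow> (real \<Rightarrow> real) \<Rightarrow> (real \<Rightarrow> real \<Rightarrow> complex) \<Rightarrow> (real \<Rightarrow> real \<Rightarrow> complex) \<Rightarrow> bool"
where
  "soler_solution m \<gamma> f \<psi>1 \<psi>2 \<longleftrightarrow>
     (\<forall>t x. \<exists>d1t d1x d2t d2x.
        ((\<lambda>s. \<psi>1 s x) has_vector_derivative d1t) (at t) \<and>
        ((\<lambda>y. \<psi>1 t y) has_vector_derivative d1x) (at x) \<and>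
        ((\<lambda>s. \<psi>2 s x) has_vector_derivative d2t) (at t) \<and>
        ((\<lambda>y. \<psi>2 t y) has_vector_derivative d2x) (at x) \<and>
        \<i> * d1t = d2x - complex_of_real (f ((cmod (\<psi>1 t x))\<^sup>2 - (cmod (\<psi>2 t x))\<^sup>2)) * \<psi>1 t x
                    + complex_of_real m * \<psi>1 t x + \<i> * complex_of_real \<gamma> * \<psi>2 t x \<and>
        \<i> * d2t = - d1x + complex_of_real (f ((cmod (\<psi>1 t x))\<^sup>2 - (cmod (\<psi>2 t x))\<^sup>2)) * \<psi>2 t x
                    - complex_of_real m * \<psi>2 t x + \<i> * complex_of_real \<gamma> * \<psi>1 t x)"

end

theory Submission
  imports Defs "HOL-Analysis.Analysis"
begin

lemma L1: "((\<lambda>s. exp (k * complex_of_real (\<omega> * s))) has_vector_derivative (k * of_real \<omega> * exp (k * of_real (\<omega> * t)))) (at t)"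
proof -
  have "((\<lambda>z. exp (k * of_real \<omega> * z)) has_field_derivative (k * of_real \<omega> * exp (k * of_real \<omega> * of_real t))) (at (of_real t))"
    by (auto intro!: derivative_eq_intros)
  from has_vector_derivative_real_field[OF this] show ?thesis by (simp add: mult.assoc)
qed

lemma modlem:
  fixes a b E p q :: complex
  assumes "E * cnj E = 1" "(cmod a)\<^sup>2 - (cmod b)\<^sup>2 = 1"
  shows "(cmod (a * p * E - \<i> * b * cnj q * cnj E))\<^sup>2 - (cmod (a * q * E - \<i> * b * cnj p * cnj E))\<^sup>2
         = (cmod p)\<^sup>2 - (cmod q)\<^sup>2"
proof -
  have ab: "a * cnj a - b * cnj b = 1"
    using assms(2) by (metis complex_norm_square of_real_1 of_real_diff)
  have "complex_of_real ((cmod (a * p * E - \<i> * b * cnj q * cnj E))\<^sup>2 - (cmod (a * q * E - \<i> * b * cnj p * cnj E))\<^sup>2)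
     = (a * p * E - \<i> * b * cnj q * cnj E) * cnj (a * p * E - \<i> * b * cnj q * cnj E)
       - (a * q * E - \<i> * b * cnj p * cnj E) * cnj (a * q * E - \<i> * b * cnj p * cnj E)"
    by (simp only: of_real_diff complex_norm_square)
  also have "\<dots> = (a * cnj a - b * cnj b) * (E * cnj E) * (p * cnj p - q * cnj q)"
    by (simp add: algebra_simps)
  also have "\<dots> = complex_of_real ((cmod p)\<^sup>2 - (cmod q)\<^sup>2)"
    by (simp only: of_real_diff complex_norm_square ab assms(1) mult_1_left)
  finally show ?thesis using of_real_eq_iff by blast
qed


theorem mainTheorem6:
  fixes m \<gamma> \<omega> :: real and f :: "real \<Rightarrow> real"
    and v u :: "real \<Rightarrow> complex" and \<alpha>p \<alpha>m :: complex
  assumes "m > 0"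
    and "soler_solution m \<gamma> f (\<lambda>t x. v x * exp (- \<i> * complex_of_real (\<omega> * t)))
                                 (\<lambda>t x. u x * exp (- \<i> * complex_of_real (\<omega> * t)))"
    and "(cmod \<alpha>m)\<^sup>2 - (cmod \<alpha>p)\<^sup>2 = 1"
  shows "soler_solution m \<gamma> f
           (\<lambda>t x. \<alpha>m * v x * exp (- \<i> * complex_of_real (\<omega> * t))
                  - \<i> * \<alpha>p * cnj (u x) * exp (\<i> * complex_of_real (\<omega> * t)))
           (\<lambda>t x. \<alpha>m * u x * exp (- \<i> * complex_of_real (\<omega> * t))
                  - \<i> * \<alpha>p * cnj (v x) * exp (\<i> * complex_of_real (\<omega> * t)))
       \<and> (\<forall>t x.
           (cmod (\<alpha>m * v x * exp (- \<i> * complex_of_real (\<omega> * t))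
                  - \<i> * \<alpha>p * cnj (u x) * exp (\<i> * complex_of_real (\<omega> * t))))\<^sup>2
         - (cmod (\<alpha>m * u x * exp (- \<i> * complex_of_real (\<omega> * t))
                  - \<i> * \<alpha>p * cnj (v x) * exp (\<i> * complex_of_real (\<omega> * t))))\<^sup>2
         = (cmod (v x))\<^sup>2 - (cmod (u x))\<^sup>2)"
proof -
  let ?E = "\<lambda>t. exp (- \<i> * complex_of_real (\<omega> * t))"
  let ?F = "\<lambda>x. complex_of_real (f ((cmod (v x))\<^sup>2 - (cmod (u x))\<^sup>2))"
  have Ec: "cnj (?E t) = exp (\<i> * complex_of_real (\<omega> * t))" for t
    by (simp add: exp_cnj)
  have EE: "?E t * cnj (?E t) = 1" for t
    by (simp add: exp_cnj flip: exp_add)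
  have mod: "(cmod (\<alpha>m * v x * ?E t - \<i> * \<alpha>p * cnj (u x) * exp (\<i> * complex_of_real (\<omega> * t))))\<^sup>2
         - (cmod (\<alpha>m * u x * ?E t - \<i> * \<alpha>p * cnj (v x) * exp (\<i> * complex_of_real (\<omega> * t))))\<^sup>2
         = (cmod (v x))\<^sup>2 - (cmod (u x))\<^sup>2" for t x
    using modlem[where p="v x" and q="u x", OF EE[of t] assms(3)] Ec[of t] by simp
  have ex: "\<exists>V U. (v has_vector_derivative V) (at x) \<and> (u has_vector_derivative U) (at x) \<and>
      of_real \<omega> * v x = U - ?F x * v x + of_real m * v x + \<i> * of_real \<gamma> * u x \<and>
      of_real \<omega> * u x = - V + ?F x * u x - of_real m * u x + \<i> * of_real \<gamma> * v x" for x
  proof -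
    obtain d1t d1x d2t d2x where
      h1: "((\<lambda>s. v x * ?E s) has_vector_derivative d1t) (at 0)"
      and h2: "((\<lambda>y. v y * ?E 0) has_vector_derivative d1x) (at x)"
      and h3: "((\<lambda>s. u x * ?E s) has_vector_derivative d2t) (at 0)"
      and h4: "((\<lambda>y. u y * ?E 0) has_vector_derivative d2x) (at x)"
      and e1: "\<i> * d1t = d2x - complex_of_real (f ((cmod (v x * ?E 0))\<^sup>2 - (cmod (u x * ?E 0))\<^sup>2)) * (v x * ?E 0)
                    + complex_of_real m * (v x * ?E 0) + \<i> * complex_of_real \<gamma> * (u x * ?E 0)"
      and e2: "\<i> * d2t = - d1x + complex_of_real (f ((cmod (v x * ?E 0))\<^sup>2 - (cmod (u x * ?E 0))\<^sup>2)) * (u x * ?E 0)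
                    - complex_of_real m * (u x * ?E 0) + \<i> * complex_of_real \<gamma> * (v x * ?E 0)"
      using assms(2)[unfolded soler_solution_def, rule_format, of x 0] by (elim exE conjE) (rule that; assumption)
    have d1: "d1t = v x * (- \<i> * of_real \<omega> * ?E 0)"
      using vector_derivative_unique_at[OF h1 has_vector_derivative_mult_right[OF L1[of "- \<i>" \<omega> 0]]] .
    have d2: "d2t = u x * (- \<i> * of_real \<omega> * ?E 0)"
      using vector_derivative_unique_at[OF h3 has_vector_derivative_mult_right[OF L1[of "- \<i>" \<omega> 0]]] .
    show ?thesis
      apply (rule exI[of _ d1x], rule exI[of _ d2x])
      using h2 h4 e1 e2 d1 d2 by (simp add: algebra_simps)
  qed
  then obtain V U where VU: "\<And>x. (v has_vector_derivative V x) (at x) \<and> (u has_vector_derivative U x) (at x) \<and>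
      of_real \<omega> * v x = U x - ?F x * v x + of_real m * v x + \<i> * of_real \<gamma> * u x \<and>
      of_real \<omega> * u x = - V x + ?F x * u x - of_real m * u x + \<i> * of_real \<gamma> * v x"
    by metis
  show ?thesis
    unfolding soler_solution_def
    apply (intro conjI allI)
    subgoal for t x
    proof -
      let ?P = "exp (\<i> * complex_of_real (\<omega> * t))"
      have Vx: "(v has_vector_derivative V x) (at x)" and Ux: "(u has_vector_derivative U x) (at x)"
        and q1: "of_real \<omega> * v x = U x - ?F x * v x + of_real m * v x + \<i> * of_real \<gamma> * u x"
        and q2: "of_real \<omega> * u x = - V x + ?F x * u x - of_real m * u x + \<i> * of_real \<gamma> * v x" using VU[of x] by auto
      have q2c: "\<omega> * cnj (u x) = - cnj (V x) + ?F x * cnj (u x) - of_real m * cnj (u x) - \<i> * of_real \<gamma> * cnj (v x)"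
        using arg_cong[OF q2, of cnj] by simp
      have q1c: "\<omega> * cnj (v x) = cnj (U x) - ?F x * cnj (v x) + of_real m * cnj (v x) - \<i> * of_real \<gamma> * cnj (u x)"
        using arg_cong[OF q1, of cnj] by simp
      have Uq: "U x = of_real \<omega> * v x + ?F x * v x - of_real m * v x - \<i> * of_real \<gamma> * u x" using q1 by (simp add: algebra_simps)
      have Vq: "V x = - of_real \<omega> * u x + ?F x * u x - of_real m * u x + \<i> * of_real \<gamma> * v x" using q2 by (simp add: algebra_simps)
      have Vcq: "cnj (V x) = - of_real \<omega> * cnj (u x) + ?F x * cnj (u x) - of_real m * cnj (u x) - \<i> * of_real \<gamma> * cnj (v x)"
        using q2c by (simp add: algebra_simps)
      have Ucq: "cnj (U x) = of_real \<omega> * cnj (v x) + ?F x * cnj (v x) - of_real m * cnj (v x) + \<i> * of_real \<gamma> * cnj (u x)"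
        using q1c by (simp add: algebra_simps)
      have Fm: "complex_of_real (f ((cmod (\<alpha>m * v x * ?E t - \<i> * \<alpha>p * cnj (u x) * ?P))\<^sup>2
                 - (cmod (\<alpha>m * u x * ?E t - \<i> * \<alpha>p * cnj (v x) * ?P))\<^sup>2)) = ?F x"
        using mod[of x t] by simp
      have dt1: "((\<lambda>s. \<alpha>m * v x * ?E s - \<i> * \<alpha>p * cnj (u x) * exp (\<i> * complex_of_real (\<omega> * s)))
           has_vector_derivative (\<alpha>m * v x * (- \<i> * of_real \<omega> * ?E t) - \<i> * \<alpha>p * cnj (u x) * (\<i> * of_real \<omega> * ?P))) (at t)"
        by (intro has_vector_derivative_diff has_vector_derivative_mult_right L1)
      have dt2: "((\<lambda>s. \<alpha>m * u x * ?E s - \<i> * \<alpha>p * cnj (v x) * exp (\<i> * complex_of_real (\<omega> * s)))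
           has_vector_derivative (\<alpha>m * u x * (- \<i> * of_real \<omega> * ?E t) - \<i> * \<alpha>p * cnj (v x) * (\<i> * of_real \<omega> * ?P))) (at t)"
        by (intro has_vector_derivative_diff has_vector_derivative_mult_right L1)
      have dx1: "((\<lambda>y. \<alpha>m * v y * ?E t - \<i> * \<alpha>p * cnj (u y) * ?P)
           has_vector_derivative (\<alpha>m * V x * ?E t - \<i> * \<alpha>p * cnj (U x) * ?P)) (at x)"
        by (intro has_vector_derivative_diff has_vector_derivative_mult_left has_vector_derivative_mult_right
              has_vector_derivative_cnj Vx Ux)
      have dx2: "((\<lambda>y. \<alpha>m * u y * ?E t - \<i> * \<alpha>p * cnj (v y) * ?P)
           has_vector_derivative (\<alpha>m * U x * ?E t - \<i> * \<alpha>p * cnj (V x) * ?P)) (at x)"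
        by (intro has_vector_derivative_diff has_vector_derivative_mult_left has_vector_derivative_mult_right
              has_vector_derivative_cnj Vx Ux)
      let ?p1 = "\<alpha>m * v x * ?E t - \<i> * \<alpha>p * cnj (u x) * ?P"
      let ?p2 = "\<alpha>m * u x * ?E t - \<i> * \<alpha>p * cnj (v x) * ?P"
      have eA: "\<i> * (\<alpha>m * v x * (- \<i> * of_real \<omega> * ?E t) - \<i> * \<alpha>p * cnj (u x) * (\<i> * of_real \<omega> * ?P))
          = (\<alpha>m * U x * ?E t - \<i> * \<alpha>p * cnj (V x) * ?P) - ?F x * ?p1 + of_real m * ?p1 + \<i> * of_real \<gamma> * ?p2"
        unfolding Uq Vcq by (simp add: algebra_simps)
      have eB: "\<i> * (\<alpha>m * u x * (- \<i> * of_real \<omega> * ?E t) - \<i> * \<alpha>p * cnj (v x) * (\<i> * of_real \<omega> * ?P))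
          = - (\<alpha>m * V x * ?E t - \<i> * \<alpha>p * cnj (U x) * ?P) + ?F x * ?p2 - of_real m * ?p2 + \<i> * of_real \<gamma> * ?p1"
        unfolding Vq Ucq by (simp add: algebra_simps)
      show ?thesis
        unfolding Fm using dt1 dx1 dt2 dx2 eA eB by blast
    qed
    using mod by blast
qed

end
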